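(* Let $\alpha>0$ and let $W\in\mathbb{R}^{\mathcal{Q}\times\mathcal{X}}$ be a symmetric workload matrix, written $W=(W^+,W^-)$ with $W^+\in\mathbb{R}^{\mathcal{Q}\times\mathcal{X}^+}$. Then $\gamma_2(W)=\gamma_2(W^+)$ and $\gamma_2(W,\alpha)=\gamma_2(W^+,\alpha)$. Moreover, if for some $U^+\in\mathbb{R}^{\mathcal{Q}\times\mathcal{X}^+}$ \[ \gamma_2(W^+,\alpha)=\frac{W^+\bullet U^+-\alpha\|U^+\|_1}{\gamma_2^*(U^+)}, \] then \[ \gamma_2(W,\alpha)=\frac{W\bullet U-\alpha\|U\|_1}{\gamma_2^*(U)}, \] where $U=\frac12(U^+,U^-)\in\mathbb{R}^{\mathcal{Q}\times\mathcal{X}}$ and the submatrix $U^-$, indexed by $\mathcal{X}^-$, has entries $u^-_{q,-x}=-u^+_{q,x}$ for all $x\in\mathcal{X}^+$, $q\in\mathcal{Q}$.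
   Context: $W$ is symmetric if $\mathcal{X}$ is partitioned into $\mathcal{X}^+,\mathcal{X}^-$ with a bijection $x\mapsto-x$ from $\mathcal{X}^+$ to $\mathcal{X}^-$ such that $w_{q,-x}=-w_{q,x}$ for all $q$ and $x\in\mathcal{X}^+$; $W^+,W^-$ are the column restrictions to $\mathcal{X}^+,\mathcal{X}^-$. $M\bullet N=\sum m_{i,j}n_{i,j}$, $\|U\|_1=\sum|u_{i,j}|$. For matrices, $\|M\|_{1\to2}$ = max column $\ell_2$ norm, $\|M\|_{2\to\infty}$ = max row $\ell_2$ norm, $\|M\|_{1\to\infty}$ = max absolute entry; $\gamma_2(M)=\min\{\|R\|_{2\to\infty}\|A\|_{1\to2}:RA=M\}$, $\gamma_2(W,\alpha)=\min\{\gamma_2(\widetilde W):\|W-\widetilde W\|_{1\to\infty}\le\alpha/2\}$, and $\gamma_2^*(U)=\max\{U\bullet V:\gamma_2(V)\le1\}$. *)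

theory Defs
  imports Complex_Main
begin

text \<open>Matrices with rows indexed by a finite set Q and columns by a finite set X
are represented as functions of type 'q => 'x => real; only entries in Q x X matter.\<close>

definition norm_2_inf :: "'q set \<Rightarrow> nat \<Rightarrow> ('q \<Rightarrow> nat \<Rightarrow> real) \<Rightarrow> real" where
  "norm_2_inf Q k R = Max (insert 0 ((\<lambda>q. sqrt (\<Sum>j<k. (R q j)^2)) ` Q))"

definition norm_1_2 :: "nat \<Rightarrow> 'x set \<Rightarrow> (nat \<Rightarrow> 'x \<Rightarrow> real) \<Rightarrow> real" where
  "norm_1_2 k X A = Max (insert 0 ((\<lambda>x. sqrt (\<Sum>j<k. (A j x)^2)) ` X))"

definition norm_1_inf :: "'q set \<Rightarrow> 'x set \<Rightarrow> ('q \<Rightarrow> 'x \<Rightarrow> real) \<Rightarrow> real" where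
  "norm_1_inf Q X M = Max (insert 0 ((\<lambda>(q,x). \<bar>M q x\<bar>) ` (Q \<times> X)))"

definition gamma2 :: "'q set \<Rightarrow> 'x set \<Rightarrow> ('q \<Rightarrow> 'x \<Rightarrow> real) \<Rightarrow> real" where
  "gamma2 Q X M = Inf {norm_2_inf Q k R * norm_1_2 k X A | k R A.
       \<forall>q\<in>Q. \<forall>x\<in>X. (\<Sum>j<k. R q j * A j x) = M q x}"

definition gamma2_approx :: "'q set \<Rightarrow> 'x set \<Rightarrow> ('q \<Rightarrow> 'x \<Rightarrow> real) \<Rightarrow> real \<Rightarrow> real" where
  "gamma2_approx Q X W \<alpha> = Inf {gamma2 Q X W' | W'. norm_1_inf Q X (\<lambda>q x. W q x - W' q x) \<le> \<alpha> / 2}"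

definition mdot :: "'q set \<Rightarrow> 'x set \<Rightarrow> ('q \<Rightarrow> 'x \<Rightarrow> real) \<Rightarrow> ('q \<Rightarrow> 'x \<Rightarrow> real) \<Rightarrow> real" where
  "mdot Q X M N = (\<Sum>q\<in>Q. \<Sum>x\<in>X. M q x * N q x)"

definition entry_l1 :: "'q set \<Rightarrow> 'x set \<Rightarrow> ('q \<Rightarrow> 'x \<Rightarrow> real) \<Rightarrow> real" where
  "entry_l1 Q X U = (\<Sum>q\<in>Q. \<Sum>x\<in>X. \<bar>U q x\<bar>)"

definition gamma2_dual :: "'q set \<Rightarrow> 'x set \<Rightarrow> ('q \<Rightarrow> 'x \<Rightarrow> real) \<Rightarrow> real" where
  "gamma2_dual Q X U = Sup {mdot Q X U V | V. gamma2 Q X V \<le> 1}"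

definition symmetric_workload ::
  "'q set \<Rightarrow> 'x set \<Rightarrow> 'x set \<Rightarrow> 'x set \<Rightarrow> ('x \<Rightarrow> 'x) \<Rightarrow> ('q \<Rightarrow> 'x \<Rightarrow> real) \<Rightarrow> bool" where
  "symmetric_workload Q X Xp Xm neg W \<longleftrightarrow>
     Xp \<union> Xm = X \<and> Xp \<inter> Xm = {} \<and> bij_betw neg Xp Xm \<and>
     (\<forall>q\<in>Q. \<forall>x\<in>Xp. W q (neg x) = - W q x)"

definition sym_extend :: "'x set \<Rightarrow> ('x \<Rightarrow> 'x) \<Rightarrow> ('q \<Rightarrow> 'x \<Rightarrow> real) \<Rightarrow> ('q \<Rightarrow> 'x \<Rightarrow> real)" where
  "sym_extend Xp neg Up = (\<lambda>q y. if y \<in> Xp then Up q y / 2 else - Up q (inv_into Xp neg y) / 2)"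

end

theory Submission imports Defs "HOL-Analysis.L2_Norm" begin

lemma L2_half: "L2_set (\<lambda>j. f j / 2) K = L2_set f K / 2"
proof -
  have s4: "sqrt (4::real) = 2" using real_sqrt_abs[of 2] by simp
  show ?thesis
  unfolding L2_set_def by (simp add: power_divide sum_divide_distrib[symmetric] real_sqrt_divide s4)
qed

lemma gamma2_ne:
  assumes "finite Q"
  shows "{norm_2_inf Q k R * norm_1_2 k X A | k R A.
       \<forall>q\<in>Q. \<forall>x\<in>X. (\<Sum>j<k. R q j * A j x) = M q x} \<noteq> {}"
proof -
  obtain h where h: "bij_betw h Q {0..<card Q}" using ex_bij_betw_finite_nat[OF assms] by blast
  define R where "R = (\<lambda>q j. if j = h q then 1 else (0::real))"
  define A where "A = (\<lambda>j x. M (inv_into Q h j) x)"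
  have "\<forall>q\<in>Q. \<forall>x\<in>X. (\<Sum>j<card Q. R q j * A j x) = M q x"
  proof (intro ballI)
    fix q x assume q: "q \<in> Q" "x \<in> X"
    have hq: "h q < card Q" using h q unfolding bij_betw_def by auto
    have inv: "inv_into Q h (h q) = q" using h q by (simp add: bij_betw_def inv_into_f_f)
    have "(\<Sum>j<card Q. R q j * A j x) = (\<Sum>j<card Q. if h q = j then A j x else 0)"
      by (rule sum.cong) (auto simp: R_def)
    also have "\<dots> = M q x" using hq inv by (simp add: A_def)
    finally show "(\<Sum>j<card Q. R q j * A j x) = M q x" .
  qed
  then show ?thesis by blast
qed

lemma n12_ge: "finite X \<Longrightarrow> x \<in> X \<Longrightarrow> sqrt (\<Sum>j<k. (A j x)^2) \<le> norm_1_2 k X A"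
  unfolding norm_1_2_def by (rule Max_ge) auto
lemma n12_le: "finite X \<Longrightarrow> 0 \<le> c \<Longrightarrow> (\<And>x. x \<in> X \<Longrightarrow> sqrt (\<Sum>j<k. (A j x)^2) \<le> c) \<Longrightarrow> norm_1_2 k X A \<le> c"
  unfolding norm_1_2_def by (subst Max_le_iff) auto
lemma n12_nonneg: "finite X \<Longrightarrow> 0 \<le> norm_1_2 k X A"
  unfolding norm_1_2_def by (rule Max_ge) auto
lemma n2i_nonneg: "finite Q \<Longrightarrow> 0 \<le> norm_2_inf Q k R"
  unfolding norm_2_inf_def by (rule Max_ge) auto
lemma n1i_ge: "finite Q \<Longrightarrow> finite X \<Longrightarrow> q \<in> Q \<Longrightarrow> x \<in> X \<Longrightarrow> \<bar>M q x\<bar> \<le> norm_1_inf Q X M"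
  unfolding norm_1_inf_def by (rule Max_ge) auto
lemma n1i_le: "finite Q \<Longrightarrow> finite X \<Longrightarrow> 0 \<le> c \<Longrightarrow> (\<And>q x. q \<in> Q \<Longrightarrow> x \<in> X \<Longrightarrow> \<bar>M q x\<bar> \<le> c) \<Longrightarrow> norm_1_inf Q X M \<le> c"
  unfolding norm_1_inf_def by (subst Max_le_iff) auto
lemma n1i_nonneg: "finite Q \<Longrightarrow> finite X \<Longrightarrow> 0 \<le> norm_1_inf Q X M"
  unfolding norm_1_inf_def by (rule Max_ge) auto
lemma n12_mono: "finite X \<Longrightarrow> Y \<subseteq> X \<Longrightarrow> norm_1_2 k Y A \<le> norm_1_2 k X A"
  by (rule n12_le) (auto intro: finite_subset n12_ge n12_nonneg)
lemma n1i_mono: "finite Q \<Longrightarrow> finite X \<Longrightarrow> Y \<subseteq> X \<Longrightarrow> norm_1_inf Q Y M \<le> norm_1_inf Q X M"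
  by (rule n1i_le) (auto intro: finite_subset n1i_ge n1i_nonneg)

lemma gamma2_nonneg: assumes "finite Q" "finite X" shows "0 \<le> gamma2 Q X M"
  unfolding gamma2_def
  apply (rule cInf_greatest)
  using gamma2_ne[OF assms(1)] apply blast
  using assms by (auto intro!: mult_nonneg_nonneg n12_nonneg n2i_nonneg)

lemma gamma2_cong: "(\<And>q x. q \<in> Q \<Longrightarrow> x \<in> X \<Longrightarrow> M q x = M' q x) \<Longrightarrow> gamma2 Q X M = gamma2 Q X M'"
  unfolding gamma2_def by (intro arg_cong[where f=Inf] Collect_cong ex_cong1 ex_cong1 ex_cong1) (auto)

lemma bdd0: "(\<And>t. t \<in> T \<Longrightarrow> (0::real) \<le> t) \<Longrightarrow> bdd_below T"
  by (rule bdd_belowI[of _ 0]) auto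

lemma inf_eq:
  fixes S T :: "real set"
  assumes "T \<subseteq> S" "\<And>s. s \<in> S \<Longrightarrow> \<exists>t\<in>T. t \<le> s" "\<And>t. t \<in> T \<Longrightarrow> 0 \<le> t"
  shows "Inf S = Inf T"
proof (cases "T = {}")
  case True
  then have "S = {}" using assms(2) by blast
  then show ?thesis using True by simp
next
  case False
  have bT: "bdd_below T" using assms(3) by (rule bdd0)
  have bS: "bdd_below S" by (rule bdd0) (use assms(2,3) in force)
  have "Inf S \<le> Inf T" by (rule cInf_superset_mono[OF False bS assms(1)])
  moreover have "Inf T \<le> Inf S"
  proof (rule cInf_greatest)
    show "S \<noteq> {}" using False assms(1) by blast
    fix s assume "s \<in> S"
    then obtain t where "t \<in> T" "t \<le> s" using assms(2) by blast
    then show "Inf T \<le> s" using cInf_lower[OF _ bT] by (meson order_trans)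
  qed
  ultimately show ?thesis by simp
qed

lemma gamma2_mono: assumes "finite Q" "finite X" "Y \<subseteq> X"
  shows "gamma2 Q Y M \<le> gamma2 Q X M"
  unfolding gamma2_def
proof (rule cInf_mono)
  show "{norm_2_inf Q k R * norm_1_2 k X A | k R A. \<forall>q\<in>Q. \<forall>x\<in>X. (\<Sum>j<k. R q j * A j x) = M q x} \<noteq> {}"
    using gamma2_ne[OF assms(1)] .
  show "bdd_below {norm_2_inf Q k R * norm_1_2 k Y A | k R A. \<forall>q\<in>Q. \<forall>x\<in>Y. (\<Sum>j<k. R q j * A j x) = M q x}"
    by (rule bdd0) (use assms in \<open>auto intro!: mult_nonneg_nonneg n12_nonneg n2i_nonneg intro: finite_subset\<close>)
  fix b assume "b \<in> {norm_2_inf Q k R * norm_1_2 k X A | k R A. \<forall>q\<in>Q. \<forall>x\<in>X. (\<Sum>j<k. R q j * A j x) = M q x}"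
  then obtain k R A where b: "b = norm_2_inf Q k R * norm_1_2 k X A" and f: "\<forall>q\<in>Q. \<forall>x\<in>X. (\<Sum>j<k. R q j * A j x) = M q x" by blast
  have "norm_2_inf Q k R * norm_1_2 k Y A \<le> b" unfolding b
    by (rule mult_left_mono[OF n12_mono n2i_nonneg]) (use assms in auto)
  moreover have "norm_2_inf Q k R * norm_1_2 k Y A \<in> {norm_2_inf Q k R * norm_1_2 k Y A | k R A. \<forall>q\<in>Q. \<forall>x\<in>Y. (\<Sum>j<k. R q j * A j x) = M q x}"
    using f assms(3) by blast
  ultimately show "\<exists>a\<in>{norm_2_inf Q k R * norm_1_2 k Y A | k R A. \<forall>q\<in>Q. \<forall>x\<in>Y. (\<Sum>j<k. R q j * A j x) = M q x}. a \<le> b" by blast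
qed


definition symext :: "'x set \<Rightarrow> ('x \<Rightarrow> 'x) \<Rightarrow> ('a \<Rightarrow> 'x \<Rightarrow> real) \<Rightarrow> ('a \<Rightarrow> 'x \<Rightarrow> real)" where
 "symext Xp neg f = (\<lambda>a y. if y \<in> Xp then f a y else - f a (inv_into Xp neg y))"

locale sp =
  fixes X Xp Xm :: "'x set" and neg :: "'x \<Rightarrow> 'x"
  assumes un: "Xp \<union> Xm = X" and dj: "Xp \<inter> Xm = {}" and bij: "bij_betw neg Xp Xm" and fin: "finite X"
begin

lemma finXp: "finite Xp" using fin un by auto
lemma XpX: "Xp \<subseteq> X" using un by auto
lemma Xm_eq: "Xm = neg ` Xp" using bij by (simp add: bij_betw_def)
lemma injn: "inj_on neg Xp" using bij by (simp add: bij_betw_def)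
lemma neg_X: "x \<in> Xp \<Longrightarrow> neg x \<in> X" using Xm_eq un by auto
lemma neg_notin: "x \<in> Xp \<Longrightarrow> neg x \<notin> Xp" using Xm_eq dj by auto
lemma inv_neg: "x \<in> Xp \<Longrightarrow> inv_into Xp neg (neg x) = x" using injn by (simp add: inv_into_f_f)
lemma X_cases: "y \<in> X \<Longrightarrow> (y \<in> Xp \<Longrightarrow> P) \<Longrightarrow> (\<And>x. x \<in> Xp \<Longrightarrow> y = neg x \<Longrightarrow> P) \<Longrightarrow> P"
  using un Xm_eq by auto
lemma symext_Xp[simp]: "y \<in> Xp \<Longrightarrow> symext Xp neg f a y = f a y" by (simp add: symext_def)
lemma symext_neg[simp]: "x \<in> Xp \<Longrightarrow> symext Xp neg f a (neg x) = - f a x"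
  by (simp add: symext_def neg_notin inv_neg)

lemma sum_split: "(\<Sum>y\<in>X. g y) = (\<Sum>x\<in>Xp. g x) + (\<Sum>x\<in>Xp. g (neg x))"
proof -
  have fm: "finite Xm" using fin un by auto
  have "(\<Sum>y\<in>X. g y) = (\<Sum>x\<in>Xp. g x) + (\<Sum>y\<in>Xm. g y)"
    using sum.union_disjoint[OF finXp fm dj] un by simp
  also have "(\<Sum>y\<in>Xm. g y) = (\<Sum>x\<in>Xp. g (neg x))"
    unfolding Xm_eq by (simp add: sum.reindex[OF injn])
  finally show ?thesis .
qed

lemma n12_symext: "norm_1_2 k X (symext Xp neg A) = norm_1_2 k Xp A"
proof (rule antisym)
  show "norm_1_2 k X (symext Xp neg A) \<le> norm_1_2 k Xp A"
  proof (rule n12_le[OF fin n12_nonneg[OF finXp]])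
    fix y assume "y \<in> X"
    then show "sqrt (\<Sum>j<k. (symext Xp neg A j y)\<^sup>2) \<le> norm_1_2 k Xp A"
      by (rule X_cases) (auto intro: n12_ge[OF finXp])
  qed
  show "norm_1_2 k Xp A \<le> norm_1_2 k X (symext Xp neg A)"
  proof (rule n12_le[OF finXp n12_nonneg[OF fin]])
    fix x assume x: "x \<in> Xp"
    have "sqrt (\<Sum>j<k. (symext Xp neg A j x)\<^sup>2) \<le> norm_1_2 k X (symext Xp neg A)"
      using x XpX by (intro n12_ge[OF fin]) auto
    then show "sqrt (\<Sum>j<k. (A j x)\<^sup>2) \<le> norm_1_2 k X (symext Xp neg A)" using x by simp
  qed
qed

lemma gamma2_sym:
  assumes fQ: "finite Q" and s: "\<And>q x. q \<in> Q \<Longrightarrow> x \<in> Xp \<Longrightarrow> M q (neg x) = - M q x"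
  shows "gamma2 Q X M = gamma2 Q Xp M"
  unfolding gamma2_def
proof (rule inf_eq)
  show "{norm_2_inf Q k R * norm_1_2 k Xp A | k R A. \<forall>q\<in>Q. \<forall>x\<in>Xp. (\<Sum>j<k. R q j * A j x) = M q x}
     \<subseteq> {norm_2_inf Q k R * norm_1_2 k X A | k R A. \<forall>q\<in>Q. \<forall>x\<in>X. (\<Sum>j<k. R q j * A j x) = M q x}"
  proof clarify
    fix k :: nat and R :: "'a \<Rightarrow> nat \<Rightarrow> real" and A :: "nat \<Rightarrow> 'x \<Rightarrow> real" assume f: "\<forall>q\<in>Q. \<forall>x\<in>Xp. (\<Sum>j<k. R q j * A j x) = M q x"
    have "\<forall>q\<in>Q. \<forall>y\<in>X. (\<Sum>j<k. R q j * symext Xp neg A j y) = M q y"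
    proof (intro ballI)
      fix q y assume q: "q \<in> Q" and y: "y \<in> X"
      from y show "(\<Sum>j<k. R q j * symext Xp neg A j y) = M q y"
      proof (rule X_cases)
        assume "y \<in> Xp" then show ?thesis using f q by simp
      next
        fix x assume x: "x \<in> Xp" "y = neg x"
        have "(\<Sum>j<k. R q j * symext Xp neg A j y) = - (\<Sum>j<k. R q j * A j x)"
          using x by (simp add: sum_negf[symmetric])
        then show ?thesis using f q x s by simp
      qed
    qed
    then show "\<exists>(k'::nat) R' A'. norm_2_inf Q k R * norm_1_2 k Xp A = norm_2_inf Q k' R' * norm_1_2 k' X A' \<and>
       (\<forall>q\<in>Q. \<forall>x\<in>X. (\<Sum>j<k'. R' q j * A' j x) = M q x)"
      by (intro exI[of _ k] exI[of _ R] exI[of _ "symext Xp neg A"]) (simp add: n12_symext)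
  qed
next
  fix s assume "s \<in> {norm_2_inf Q k R * norm_1_2 k X A | k R A. \<forall>q\<in>Q. \<forall>x\<in>X. (\<Sum>j<k. R q j * A j x) = M q x}"
  then obtain k R A where b: "s = norm_2_inf Q k R * norm_1_2 k X A" and f: "\<forall>q\<in>Q. \<forall>x\<in>X. (\<Sum>j<k. R q j * A j x) = M q x" by blast
  have "norm_2_inf Q k R * norm_1_2 k Xp A \<le> s" unfolding b
    by (rule mult_left_mono[OF n12_mono[OF fin XpX] n2i_nonneg[OF fQ]])
  moreover have "norm_2_inf Q k R * norm_1_2 k Xp A \<in> {norm_2_inf Q k R * norm_1_2 k Xp A | k R A. \<forall>q\<in>Q. \<forall>x\<in>Xp. (\<Sum>j<k. R q j * A j x) = M q x}"
    using f XpX by blast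
  ultimately show "\<exists>t\<in>{norm_2_inf Q k R * norm_1_2 k Xp A | k R A. \<forall>q\<in>Q. \<forall>x\<in>Xp. (\<Sum>j<k. R q j * A j x) = M q x}. t \<le> s" by blast
next
  fix t assume "t \<in> {norm_2_inf Q k R * norm_1_2 k Xp A | k R A. \<forall>q\<in>Q. \<forall>x\<in>Xp. (\<Sum>j<k. R q j * A j x) = M q x}"
  then show "0 \<le> t" using fQ finXp by (auto intro!: mult_nonneg_nonneg n12_nonneg n2i_nonneg)
qed

lemma gamma2_symext: "finite Q \<Longrightarrow> gamma2 Q X (symext Xp neg M) = gamma2 Q Xp M"
  by (subst gamma2_sym) (auto intro: gamma2_cong)

lemma approx_eq:
  assumes fQ: "finite Q" and s: "\<And>q x. q \<in> Q \<Longrightarrow> x \<in> Xp \<Longrightarrow> W q (neg x) = - W q x"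
    and a: "\<alpha> > 0"
  shows "gamma2_approx Q X W \<alpha> = gamma2_approx Q Xp W \<alpha>"
  unfolding gamma2_approx_def
proof (rule inf_eq)
  show "{gamma2 Q Xp W' | W'. norm_1_inf Q Xp (\<lambda>q x. W q x - W' q x) \<le> \<alpha> / 2}
     \<subseteq> {gamma2 Q X W' | W'. norm_1_inf Q X (\<lambda>q x. W q x - W' q x) \<le> \<alpha> / 2}"
  proof clarify
    fix W' assume c: "norm_1_inf Q Xp (\<lambda>q x. W q x - W' q x) \<le> \<alpha> / 2"
    have "norm_1_inf Q X (\<lambda>q x. W q x - symext Xp neg W' q x) \<le> \<alpha> / 2"
    proof (rule n1i_le[OF fQ fin])
      show "0 \<le> \<alpha> / 2" using a by simp
      fix q y assume q: "q \<in> Q" and y: "y \<in> X"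
      from y show "\<bar>W q y - symext Xp neg W' q y\<bar> \<le> \<alpha> / 2"
      proof (rule X_cases)
        assume "y \<in> Xp"
        then show ?thesis using n1i_ge[OF fQ finXp q, of y "\<lambda>q x. W q x - W' q x"] c by simp
      next
        fix x assume x: "x \<in> Xp" "y = neg x"
        have e: "W q y - symext Xp neg W' q y = -(W q x - W' q x)" using x s[OF q x(1)] by simp
        show ?thesis unfolding e abs_minus_cancel
          using n1i_ge[OF fQ finXp q x(1), of "\<lambda>q x. W q x - W' q x"] c by simp
      qed
    qed
    then show "\<exists>W''. gamma2 Q Xp W' = gamma2 Q X W'' \<and> norm_1_inf Q X (\<lambda>q x. W q x - W'' q x) \<le> \<alpha> / 2"
      using gamma2_symext[OF fQ] by metis
  qed
next
  fix s assume "s \<in> {gamma2 Q X W' | W'. norm_1_inf Q X (\<lambda>q x. W q x - W' q x) \<le> \<alpha> / 2}"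
  then obtain W' where b: "s = gamma2 Q X W'" and c: "norm_1_inf Q X (\<lambda>q x. W q x - W' q x) \<le> \<alpha> / 2" by blast
  have "norm_1_inf Q Xp (\<lambda>q x. W q x - W' q x) \<le> \<alpha> / 2"
    using n1i_mono[OF fQ fin XpX] c order_trans by blast
  then show "\<exists>t\<in>{gamma2 Q Xp W' | W'. norm_1_inf Q Xp (\<lambda>q x. W q x - W' q x) \<le> \<alpha> / 2}. t \<le> s"
    using gamma2_mono[OF fQ fin XpX, of W'] b by blast
next
  fix t assume "t \<in> {gamma2 Q Xp W' | W'. norm_1_inf Q Xp (\<lambda>q x. W q x - W' q x) \<le> \<alpha> / 2}"
  then show "0 \<le> t" using gamma2_nonneg[OF fQ finXp] by auto
qed

end

context sp begin

lemma se_Xp[simp]: "y \<in> Xp \<Longrightarrow> sym_extend Xp neg U q y = U q y / 2" by (simp add: sym_extend_def)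
lemma se_neg[simp]: "x \<in> Xp \<Longrightarrow> sym_extend Xp neg U q (neg x) = - U q x / 2"
  by (simp add: sym_extend_def neg_notin inv_neg)

lemma mdot_eq:
  assumes s: "\<And>q x. q \<in> Q \<Longrightarrow> x \<in> Xp \<Longrightarrow> W q (neg x) = - W q x"
  shows "mdot Q X W (sym_extend Xp neg U) = mdot Q Xp W U"
  unfolding mdot_def
proof (rule sum.cong[OF refl])
  fix q assume q: "q \<in> Q"
  have "(\<Sum>x\<in>X. W q x * sym_extend Xp neg U q x)
     = (\<Sum>x\<in>Xp. W q x * (U q x / 2)) + (\<Sum>x\<in>Xp. W q x * (U q x / 2))"
    unfolding sum_split using s[OF q] by (simp cong: sum.cong)
  also have "\<dots> = (\<Sum>x\<in>Xp. W q x * U q x)" by (simp add: sum.distrib[symmetric] algebra_simps)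
  finally show "(\<Sum>x\<in>X. W q x * sym_extend Xp neg U q x) = (\<Sum>x\<in>Xp. W q x * U q x)" .
qed

lemma l1_eq: "entry_l1 Q X (sym_extend Xp neg U) = entry_l1 Q Xp U"
  unfolding entry_l1_def
proof (rule sum.cong[OF refl])
  fix q assume q: "q \<in> Q"
  have "(\<Sum>x\<in>X. \<bar>sym_extend Xp neg U q x\<bar>)
     = (\<Sum>x\<in>Xp. \<bar>U q x\<bar> / 2) + (\<Sum>x\<in>Xp. \<bar>U q x\<bar> / 2)"
    unfolding sum_split by (simp cong: sum.cong)
  also have "\<dots> = (\<Sum>x\<in>Xp. \<bar>U q x\<bar>)" by (simp add: sum.distrib[symmetric])
  finally show "(\<Sum>x\<in>X. \<bar>sym_extend Xp neg U q x\<bar>) = (\<Sum>x\<in>Xp. \<bar>U q x\<bar>)" .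
qed

lemma gamma2_anti_le:
  assumes fQ: "finite Q"
  shows "gamma2 Q Xp (\<lambda>q x. (V q x - V q (neg x)) / 2) \<le> gamma2 Q X V"
  unfolding gamma2_def
proof (rule cInf_mono)
  show "{norm_2_inf Q k R * norm_1_2 k X A | k R A. \<forall>q\<in>Q. \<forall>x\<in>X. (\<Sum>j<k. R q j * A j x) = V q x} \<noteq> {}"
    using gamma2_ne[OF fQ] .
  show "bdd_below {norm_2_inf Q k R * norm_1_2 k Xp A | k R A. \<forall>q\<in>Q. \<forall>x\<in>Xp. (\<Sum>j<k. R q j * A j x) = (V q x - V q (neg x)) / 2}"
    by (rule bdd0) (use fQ finXp in \<open>auto intro!: mult_nonneg_nonneg n12_nonneg n2i_nonneg\<close>)
  fix b assume "b \<in> {norm_2_inf Q k R * norm_1_2 k X A | k R A. \<forall>q\<in>Q. \<forall>x\<in>X. (\<Sum>j<k. R q j * A j x) = V q x}"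
  then obtain k R A where b: "b = norm_2_inf Q k R * norm_1_2 k X A" and f: "\<forall>q\<in>Q. \<forall>x\<in>X. (\<Sum>j<k. R q j * A j x) = V q x" by blast
  define A' where "A' = (\<lambda>j x. (A j x - A j (neg x)) / 2)"
  have f': "\<forall>q\<in>Q. \<forall>x\<in>Xp. (\<Sum>j<k. R q j * A' j x) = (V q x - V q (neg x)) / 2"
  proof (intro ballI)
    fix q x assume q: "q \<in> Q" and x: "x \<in> Xp"
    have "(\<Sum>j<k. R q j * A' j x) = ((\<Sum>j<k. R q j * A j x) - (\<Sum>j<k. R q j * A j (neg x))) / 2"
      unfolding A'_def by (simp add: right_diff_distrib diff_divide_distrib sum_subtractf sum_divide_distrib)
    then show "(\<Sum>j<k. R q j * A' j x) = (V q x - V q (neg x)) / 2"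
      using f q x XpX neg_X by auto
  qed
  have n: "norm_1_2 k Xp A' \<le> norm_1_2 k X A"
  proof (rule n12_le[OF finXp n12_nonneg[OF fin]])
    fix x assume x: "x \<in> Xp"
    have "sqrt (\<Sum>j<k. (A' j x)\<^sup>2) = L2_set (\<lambda>j. A j x / 2 + (- A j (neg x)) / 2) {..<k}"
      unfolding L2_set_def A'_def by (simp add: diff_divide_distrib)
    also have "\<dots> \<le> L2_set (\<lambda>j. A j x / 2) {..<k} + L2_set (\<lambda>j. (- A j (neg x)) / 2) {..<k}"
      by (rule L2_set_triangle_ineq)
    also have "\<dots> = L2_set (\<lambda>j. A j x) {..<k} / 2 + L2_set (\<lambda>j. A j (neg x)) {..<k} / 2"
      unfolding L2_half by (simp add: L2_set_def)
    also have "\<dots> \<le> norm_1_2 k X A / 2 + norm_1_2 k X A / 2"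
      using n12_ge[OF fin, where x=x and k=k and A=A] n12_ge[OF fin, where x="neg x" and k=k and A=A] x XpX neg_X
      unfolding L2_set_def by (intro add_mono divide_right_mono) auto
    finally show "sqrt (\<Sum>j<k. (A' j x)\<^sup>2) \<le> norm_1_2 k X A" by simp
  qed
  have "norm_2_inf Q k R * norm_1_2 k Xp A' \<le> b" unfolding b
    by (rule mult_left_mono[OF n n2i_nonneg[OF fQ]])
  moreover have "norm_2_inf Q k R * norm_1_2 k Xp A' \<in> {norm_2_inf Q k R * norm_1_2 k Xp A | k R A. \<forall>q\<in>Q. \<forall>x\<in>Xp. (\<Sum>j<k. R q j * A j x) = (V q x - V q (neg x)) / 2}"
    using f' by blast
  ultimately show "\<exists>a\<in>{norm_2_inf Q k R * norm_1_2 k Xp A | k R A. \<forall>q\<in>Q. \<forall>x\<in>Xp. (\<Sum>j<k. R q j * A j x) = (V q x - V q (neg x)) / 2}. a \<le> b" by blast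
qed

lemma dual_eq:
  assumes fQ: "finite Q"
  shows "gamma2_dual Q X (sym_extend Xp neg U) = gamma2_dual Q Xp U"
  unfolding gamma2_dual_def
proof (rule arg_cong[where f=Sup], rule set_eqI, rule iffI)
  fix z assume "z \<in> {mdot Q X (sym_extend Xp neg U) V | V. gamma2 Q X V \<le> 1}"
  then obtain V where z: "z = mdot Q X (sym_extend Xp neg U) V" and g: "gamma2 Q X V \<le> 1" by blast
  define V' where "V' = (\<lambda>q x. (V q x - V q (neg x)) / 2)"
  have "gamma2 Q Xp V' \<le> 1" unfolding V'_def using gamma2_anti_le[OF fQ, of V] g by linarith
  moreover have "z = mdot Q Xp U V'"
    unfolding z mdot_def
  proof (rule sum.cong[OF refl])
    fix q assume q: "q \<in> Q"
    show "(\<Sum>x\<in>X. sym_extend Xp neg U q x * V q x) = (\<Sum>x\<in>Xp. U q x * V' q x)"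
      unfolding sum_split V'_def
      by (simp add: sum.distrib[symmetric] algebra_simps diff_divide_distrib cong: sum.cong)
  qed
  ultimately show "z \<in> {mdot Q Xp U V | V. gamma2 Q Xp V \<le> 1}" by blast
next
  fix z assume "z \<in> {mdot Q Xp U V | V. gamma2 Q Xp V \<le> 1}"
  then obtain V where z: "z = mdot Q Xp U V" and g: "gamma2 Q Xp V \<le> 1" by blast
  have "gamma2 Q X (symext Xp neg V) \<le> 1" using gamma2_symext[OF fQ] g by simp
  moreover have "z = mdot Q X (sym_extend Xp neg U) (symext Xp neg V)"
    unfolding z mdot_def
  proof (rule sum.cong[OF refl])
    fix q assume q: "q \<in> Q"
    show "(\<Sum>x\<in>Xp. U q x * V q x) = (\<Sum>x\<in>X. sym_extend Xp neg U q x * symext Xp neg V q x)"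
      unfolding sum_split
      by (simp add: sum.distrib[symmetric] cong: sum.cong)
  qed
  ultimately show "z \<in> {mdot Q X (sym_extend Xp neg U) V | V. gamma2 Q X V \<le> 1}" by blast
qed

end

theorem lemma3p10:
  fixes Q :: "'q set" and X Xp Xm :: "'x set" and neg :: "'x \<Rightarrow> 'x"
    and W :: "'q \<Rightarrow> 'x \<Rightarrow> real" and \<alpha> :: real
  assumes "finite Q" and "finite X" and "\<alpha> > 0"
    and "symmetric_workload Q X Xp Xm neg W"
  shows "gamma2 Q X W = gamma2 Q Xp W
    \<and> gamma2_approx Q X W \<alpha> = gamma2_approx Q Xp W \<alpha>
    \<and> (\<forall>Up :: 'q \<Rightarrow> 'x \<Rightarrow> real.
           gamma2_approx Q Xp W \<alpha> = (mdot Q Xp W Up - \<alpha> * entry_l1 Q Xp Up) / gamma2_dual Q Xp Up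
           \<longrightarrow> gamma2_approx Q X W \<alpha> =
               (mdot Q X W (sym_extend Xp neg Up) - \<alpha> * entry_l1 Q X (sym_extend Xp neg Up))
                 / gamma2_dual Q X (sym_extend Xp neg Up))"
proof -
  have S: "Xp \<union> Xm = X" "Xp \<inter> Xm = {}" "bij_betw neg Xp Xm" and s: "\<And>q x. q \<in> Q \<Longrightarrow> x \<in> Xp \<Longrightarrow> W q (neg x) = - W q x"
    using assms(4) unfolding symmetric_workload_def by auto
  interpret sp X Xp Xm neg using S assms(2) by unfold_locales auto
  have a: "gamma2_approx Q X W \<alpha> = gamma2_approx Q Xp W \<alpha>" by (rule approx_eq[where W=W]) (use assms s in auto)
  have g: "gamma2 Q X W = gamma2 Q Xp W" by (rule gamma2_sym[where M=W]) (use assms s in auto)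
  have h: "gamma2_approx Q X W \<alpha> =
               (mdot Q X W (sym_extend Xp neg Up) - \<alpha> * entry_l1 Q X (sym_extend Xp neg Up))
                 / gamma2_dual Q X (sym_extend Xp neg Up)"
    if H: "gamma2_approx Q Xp W \<alpha> = (mdot Q Xp W Up - \<alpha> * entry_l1 Q Xp Up) / gamma2_dual Q Xp Up" for Up
  proof -
    have m: "mdot Q X W (sym_extend Xp neg Up) = mdot Q Xp W Up" by (rule mdot_eq) (use s in auto)
    show ?thesis unfolding a m l1_eq dual_eq[OF assms(1)] by (rule H)
  qed
  show ?thesis using g a h by blast
qed

end
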